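(* Let $g=2G\,du\,(dv+v\beta_A dx^A)+\mu_{AB}dx^Adx^B$ be a metric in Rácz–Wald coordinates $\{u,v,x^A\}$, where $G$ is a nowhere vanishing function, $\boldsymbol\beta=\beta_Adx^A$ a one-form and $\mu_{AB}$ a Riemannian metric on the codimension-two surfaces $\{u,v=\text{const}\}$, all depending only on $(s=uv,x^A)$. Assume the Killing vector $\eta=u\partial_u-v\partial_v$ is integrable with respect to $g$, i.e. $\boldsymbol\eta\wedge d\boldsymbol\eta=0$ for $\boldsymbol\eta=g(\eta,\cdot)$. Then $\boldsymbol\beta$ is closed, and hence locally exact. *)

theory Defs
  imports "HOL-Analysis.Analysis"
begin

fun Ck_on :: "nat \<Rightarrow> 'a::euclidean_space set \<Rightarrow> ('a \<Rightarrow> 'b::real_normed_vector) \<Rightarrow> bool" where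
  "Ck_on 0 S f = continuous_on S f"
| "Ck_on (Suc k) S f =
     (f differentiable_on S \<and>
      (\<forall>i\<in>Basis. Ck_on k S (\<lambda>x. frechet_derivative f (at x) i)))"

definition smooth_on :: "'a::euclidean_space set \<Rightarrow> ('a \<Rightarrow> 'b::real_normed_vector) \<Rightarrow> bool" where
  "smooth_on S f \<longleftrightarrow> (\<forall>k. Ck_on k S f)"

datatype 'n coord = CU | CV | CX 'n

instance coord :: (finite) finite
proof
  have "(UNIV :: 'a coord set) = {CU, CV} \<union> range CX"
    apply (rule set_eqI)
    apply (case_tac x)
      apply auto
    done
  then show "finite (UNIV :: 'a coord set)" by (metis finite.insertI finite.emptyI finite_UnI finite_imageI finite)
qed

definition cu :: "real^('n::finite coord) \<Rightarrow> real" where "cu p = p $ CU"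
definition cv :: "real^('n::finite coord) \<Rightarrow> real" where "cv p = p $ CV"
definition cx :: "real^('n::finite coord) \<Rightarrow> real^'n" where "cx p = (\<chi> A. p $ CX A)"

definition sx :: "real^('n::finite coord) \<Rightarrow> real \<times> (real^'n)" where
  "sx p = (cu p * cv p, cx p)"

definition partial :: "'m::finite \<Rightarrow> (real^'m \<Rightarrow> real) \<Rightarrow> real^'m \<Rightarrow> real" where
  "partial i f p = frechet_derivative f (at p) (axis i 1)"

definition dform :: "(real^'m::finite \<Rightarrow> 'm \<Rightarrow> real) \<Rightarrow> real^'m \<Rightarrow> 'm \<Rightarrow> 'm \<Rightarrow> real" where
  "dform \<alpha> p i j = partial i (\<lambda>q. \<alpha> q j) p - partial j (\<lambda>q. \<alpha> q i) p"

text \<open>Components (alpha wedge d alpha)_{ijk} (cyclic sum, up to a constant factor).\<close>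
definition wedge_d :: "(real^'m::finite \<Rightarrow> 'm \<Rightarrow> real) \<Rightarrow> real^'m \<Rightarrow> 'm \<Rightarrow> 'm \<Rightarrow> 'm \<Rightarrow> real" where
  "wedge_d \<alpha> p i j k =
     \<alpha> p i * dform \<alpha> p j k + \<alpha> p j * dform \<alpha> p k i + \<alpha> p k * dform \<alpha> p i j"

definition flat :: "(real^'m::finite \<Rightarrow> 'm \<Rightarrow> 'm \<Rightarrow> real) \<Rightarrow> (real^'m \<Rightarrow> 'm \<Rightarrow> real)
                    \<Rightarrow> real^'m \<Rightarrow> 'm \<Rightarrow> real" where
  "flat g X p i = (\<Sum>j\<in>UNIV. g p i j * X p j)"

text \<open>G, beta, mu are functions of (s, x^A). Symmetric products: dx dy = (dx(x)dy + dy(x)dx)/2.\<close>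
definition rw_metric ::
  "(real \<times> (real^'n) \<Rightarrow> real) \<Rightarrow> (real \<times> (real^'n) \<Rightarrow> real^'n) \<Rightarrow> (real \<times> (real^'n) \<Rightarrow> (real^'n^'n))
   \<Rightarrow> real^('n::finite coord) \<Rightarrow> 'n coord \<Rightarrow> 'n coord \<Rightarrow> real" where
  "rw_metric G \<beta> \<mu> p i j =
     (case (i, j) of
        (CU, CV) \<Rightarrow> G (sx p)
      | (CV, CU) \<Rightarrow> G (sx p)
      | (CU, CX A) \<Rightarrow> G (sx p) * cv p * \<beta> (sx p) $ A
      | (CX A, CU) \<Rightarrow> G (sx p) * cv p * \<beta> (sx p) $ A
      | (CX A, CX B) \<Rightarrow> \<mu> (sx p) $ A $ B
      | _ \<Rightarrow> 0)"

definition killing_eta :: "real^('n::finite coord) \<Rightarrow> 'n coord \<Rightarrow> real" where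
  "killing_eta p i = (case i of CU \<Rightarrow> cu p | CV \<Rightarrow> - cv p | CX A \<Rightarrow> 0)"

definition beta_form :: "(real \<times> (real^'n) \<Rightarrow> real^'n) \<Rightarrow> real^('n::finite coord) \<Rightarrow> 'n coord \<Rightarrow> real" where
  "beta_form \<beta> p i = (case i of CX A \<Rightarrow> \<beta> (sx p) $ A | _ \<Rightarrow> 0)"

end

theory Submission
  imports Defs
begin


lemma poincare:
  fixes F :: "'a::euclidean_space \<Rightarrow> 'a" and F' :: "'a \<Rightarrow> 'a \<Rightarrow> 'a"
  assumes S: "convex S" "open S" "p \<in> S"
  and der: "\<And>x. x \<in> S \<Longrightarrow> (F has_derivative F' x) (at x)"
  and sym: "\<And>x h k. x \<in> S \<Longrightarrow> F' x h \<bullet> k = F' x k \<bullet> h"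
  and cont: "\<And>i. i \<in> Basis \<Longrightarrow> continuous_on S (\<lambda>x. F' x i)"
  shows "\<exists>f. \<forall>q\<in>S. (f has_derivative (\<lambda>h. F q \<bullet> h)) (at q)"
proof -
  define \<gamma> where "\<gamma> x t = p + t *\<^sub>R (x - p)" for x and t :: real
  have \<gamma>S: "\<gamma> x t \<in> S" if "x \<in> S" "t \<in> cbox 0 1" for x t
  proof -
    have "(1 - t) *\<^sub>R p + t *\<^sub>R x \<in> S"
      using S(1) S(3) that unfolding convex_alt by auto
    moreover have "(1 - t) *\<^sub>R p + t *\<^sub>R x = \<gamma> x t"
      by (simp add: \<gamma>_def algebra_simps)
    ultimately show ?thesis by simp
  qed
  have lin: "bounded_linear (F' x)" if "x \<in> S" for x
    using der[OF that] has_derivative_bounded_linear by blast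
  have contF: "continuous_on S F"
    using der by (meson continuous_at_imp_continuous_on has_derivative_continuous)
  define g where "g x t = Blinfun (\<lambda>h. (t *\<^sub>R F' (\<gamma> x t) h) \<bullet> (x - p) + F (\<gamma> x t) \<bullet> h)" for x t
  have g_apply: "blinfun_apply (g x t) = (\<lambda>h. (t *\<^sub>R F' (\<gamma> x t) h) \<bullet> (x - p) + F (\<gamma> x t) \<bullet> h)"
    if "x \<in> S" "t \<in> cbox 0 1" for x t
    unfolding g_def
    apply (rule bounded_linear_Blinfun_apply)
    using lin[OF \<gamma>S[OF that]]
    by (intro bounded_linear_intros)
  define f where "f x = integral (cbox 0 (1::real)) (\<lambda>t. F (\<gamma> x t) \<bullet> (x - p))" for x
  have hd: "((\<lambda>x. F (\<gamma> x t) \<bullet> (x - p)) has_derivative blinfun_apply (g x t)) (at x within S)"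
    if "x \<in> S" "t \<in> cbox 0 1" for x t
  proof -
    have d1: "((\<lambda>x. \<gamma> x t) has_derivative (\<lambda>h. t *\<^sub>R h)) (at x within S)"
      unfolding \<gamma>_def by (auto intro!: derivative_eq_intros)
    have d2: "((\<lambda>x. F (\<gamma> x t)) has_derivative (\<lambda>h. F' (\<gamma> x t) (t *\<^sub>R h))) (at x within S)"
      using has_derivative_in_compose[OF d1 has_derivative_at_withinI[OF der[OF \<gamma>S[OF that]]]]
      by (simp add: o_def)
    have "((\<lambda>x. F (\<gamma> x t) \<bullet> (x - p)) has_derivative
          (\<lambda>h. F (\<gamma> x t) \<bullet> h + F' (\<gamma> x t) (t *\<^sub>R h) \<bullet> (x - p))) (at x within S)"
      by (rule has_derivative_eq_rhs, rule has_derivative_inner[OF d2], auto intro!: derivative_eq_intros)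
    then show ?thesis
      apply (subst g_apply[OF that])
      apply (rule has_derivative_eq_rhs, assumption)
      using linear_cmul[OF bounded_linear.linear[OF lin[OF \<gamma>S[OF that]]]]
      by (auto simp: algebra_simps)
  qed
  have contg: "continuous_on (S \<times> cbox 0 1) (\<lambda>(x, t). g x t)"
  proof (rule continuous_on_blinfun_componentwise)
    fix i :: 'a assume i: "i \<in> Basis"
    have c\<gamma>: "continuous_on (S \<times> cbox 0 1) (\<lambda>z. \<gamma> (fst z) (snd z))"
      unfolding \<gamma>_def by (intro continuous_intros)
    have im: "(\<lambda>z. \<gamma> (fst z) (snd z)) ` (S \<times> cbox 0 1) \<subseteq> S" using \<gamma>S by auto
    have c1: "continuous_on (S \<times> cbox 0 1) (\<lambda>z. F' (\<gamma> (fst z) (snd z)) i)"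
      using continuous_on_compose2[OF cont[OF i] c\<gamma> im] .
    have c2: "continuous_on (S \<times> cbox 0 1) (\<lambda>z. F (\<gamma> (fst z) (snd z)))"
      using continuous_on_compose2[OF contF c\<gamma> im] .
    have "continuous_on (S \<times> cbox 0 1) (\<lambda>z. (snd z *\<^sub>R F' (\<gamma> (fst z) (snd z)) i) \<bullet> (fst z - p) + F (\<gamma> (fst z) (snd z)) \<bullet> i)"
      by (intro continuous_intros c1 c2)
    then show "continuous_on (S \<times> cbox 0 1) (\<lambda>x. blinfun_apply (case x of (x, t) \<Rightarrow> g x t) i)"
      apply (rule continuous_on_eq)
      by (auto simp: g_apply)
  qed
  have integ: "(\<lambda>t. F (\<gamma> x t) \<bullet> (x - p)) integrable_on cbox 0 1" if "x \<in> S" for x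
  proof -
    have c\<gamma>: "continuous_on (cbox 0 1) (\<lambda>t. \<gamma> x t)"
      unfolding \<gamma>_def by (intro continuous_intros)
    have im: "(\<lambda>t. \<gamma> x t) ` cbox 0 1 \<subseteq> S" using \<gamma>S[OF that] by blast
    have "continuous_on (cbox 0 1) (\<lambda>t. F (\<gamma> x t))"
      using continuous_on_compose2[OF contF c\<gamma> im] .
    then have "continuous_on (cbox 0 1) (\<lambda>t. F (\<gamma> x t) \<bullet> (x - p))"
      by (intro continuous_intros)
    then show ?thesis by (rule integrable_continuous)
  qed
  show ?thesis
  proof (intro exI ballI)
    fix q assume q: "q \<in> S"
    have L: "(f has_derivative blinfun_apply (integral (cbox 0 1) (g q))) (at q within S)"
      unfolding f_def
      by (rule leibniz_rule[OF hd integ contg q S(1)])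
    have contgq: "continuous_on (cbox 0 1) (g q)"
    proof -
      have c: "continuous_on (cbox 0 1) (\<lambda>t::real. (q, t))" by (intro continuous_intros)
      have im: "(\<lambda>t. (q, t)) ` cbox 0 1 \<subseteq> S \<times> cbox 0 1" using q by auto
      show ?thesis using continuous_on_compose2[OF contg c im] by simp
    qed
    have ig: "g q integrable_on cbox 0 1"
      using contgq by (rule integrable_continuous)
    have eq: "blinfun_apply (integral (cbox 0 1) (g q)) h = F q \<bullet> h" for h
    proof -
      have "blinfun_apply (integral (cbox 0 1) (g q)) h = integral (cbox 0 1) (\<lambda>t. blinfun_apply (g q t) h)"
        by (rule blinfun_apply_integral[OF ig])
      also have "\<dots> = integral {0..1} (\<lambda>t. F (\<gamma> q t) \<bullet> h + t * (F' (\<gamma> q t) (q - p) \<bullet> h))"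
        unfolding cbox_interval
      proof (rule integral_cong)
        fix t :: real assume t: "t \<in> {0..1}"
        then have t': "t \<in> cbox 0 1" by simp
        show "blinfun_apply (g q t) h = F (\<gamma> q t) \<bullet> h + t * (F' (\<gamma> q t) (q - p) \<bullet> h)"
          using sym[OF \<gamma>S[OF q t'], of h "q - p"]
          by (simp add: g_apply[OF q t'])
      qed
      also have "\<dots> = 1 * (F (\<gamma> q 1) \<bullet> h) - 0 * (F (\<gamma> q 0) \<bullet> h)"
      proof (rule integral_unique, rule fundamental_theorem_of_calculus)
        show "(0::real) \<le> 1" by simp
        fix t :: real assume t: "t \<in> {0..1}"
        then have t': "t \<in> cbox 0 1" by simp
        have d1: "((\<lambda>t. \<gamma> q t) has_derivative (\<lambda>s. s *\<^sub>R (q - p))) (at t within {0..1})"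
          unfolding \<gamma>_def by (auto intro!: derivative_eq_intros)
        have d2: "((\<lambda>t. F (\<gamma> q t)) has_derivative (\<lambda>s. F' (\<gamma> q t) (s *\<^sub>R (q - p)))) (at t within {0..1})"
          using has_derivative_in_compose[OF d1 has_derivative_at_withinI[OF der[OF \<gamma>S[OF q t']]]]
          by (simp add: o_def)
        have d3: "((\<lambda>t. t * (F (\<gamma> q t) \<bullet> h)) has_derivative
             (\<lambda>s. t * (F' (\<gamma> q t) (s *\<^sub>R (q - p)) \<bullet> h) + s * (F (\<gamma> q t) \<bullet> h))) (at t within {0..1})"
        proof -
          have d2': "((\<lambda>t. F (\<gamma> q t) \<bullet> h) has_derivative (\<lambda>s. F' (\<gamma> q t) (s *\<^sub>R (q - p)) \<bullet> h)) (at t within {0..1})"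
            using has_derivative_inner[OF d2 has_derivative_const[of h]] by simp
          show ?thesis
            using has_derivative_mult[OF has_derivative_ident d2'] by (simp add: algebra_simps)
        qed
        show "((\<lambda>t. t * (F (\<gamma> q t) \<bullet> h)) has_vector_derivative F (\<gamma> q t) \<bullet> h + t * (F' (\<gamma> q t) (q - p) \<bullet> h)) (at t within {0..1})"
          unfolding has_vector_derivative_def
          apply (rule has_derivative_eq_rhs[OF d3])
          using linear_cmul[OF bounded_linear.linear[OF lin[OF \<gamma>S[OF q t']]]]
          by (simp add: distrib_left distrib_right mult.commute mult.left_commute add.commute)
      qed
      also have "\<dots> = F q \<bullet> h" by (simp add: \<gamma>_def)
      finally show ?thesis .
    qed
    show "(f has_derivative (\<lambda>h. F q \<bullet> h)) (at q)"
      using L eq at_within_open[OF q S(2)] by (metis ext)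
  qed
qed




lemma sum_coord: "(\<Sum>i\<in>UNIV. f i) = f CU + f CV + (\<Sum>A\<in>UNIV. f (CX A))"
  for f :: "'n::finite coord \<Rightarrow> 'b::comm_monoid_add"
proof -
  have U: "(UNIV :: 'n coord set) = insert CU (insert CV (range CX))"
    by (metis UNIV_eq_I coord.exhaust insert_iff rangeI)
  have "(\<Sum>i\<in>UNIV. f i) = f CU + (f CV + sum f (range CX))"
    unfolding U by (subst sum.insert, auto)+
  also have "sum f (range CX) = (\<Sum>A\<in>UNIV. f (CX A))"
    by (subst sum.reindex) (auto simp: inj_def)
  finally show ?thesis by (simp add: add.assoc)
qed

lemma flat_CU: "flat (rw_metric G \<beta> \<mu>) killing_eta q CU = - (G (sx q) * cv q)"
  by (simp add: flat_def sum_coord rw_metric_def killing_eta_def)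
lemma flat_CV: "flat (rw_metric G \<beta> \<mu>) killing_eta q CV = G (sx q) * cu q"
  by (simp add: flat_def sum_coord rw_metric_def killing_eta_def)
lemma flat_CX: "flat (rw_metric G \<beta> \<mu>) killing_eta q (CX A) = G (sx q) * cv q * \<beta> (sx q) $ A * cu q"
  by (simp add: flat_def sum_coord rw_metric_def killing_eta_def)

definition dsx :: "real^('n::finite coord) \<Rightarrow> real^('n coord) \<Rightarrow> real \<times> (real^'n)" where
  "dsx q h = (cu q * cv h + cu h * cv q, cx h)"

lemma bl_cu: "bounded_linear cu" unfolding cu_def by (rule bounded_linear_vec_nth)
lemma bl_cv: "bounded_linear cv" unfolding cv_def by (rule bounded_linear_vec_nth)
lemma bl_cx: "bounded_linear (cx :: real^('n::finite coord) \<Rightarrow> real^'n)"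
proof -
  have "linear (cx :: real^('n::finite coord) \<Rightarrow> real^'n)"
    by (rule linearI) (auto simp: cx_def vec_eq_iff)
  then show ?thesis by (simp add: linear_conv_bounded_linear)
qed

lemma sx_deriv: "(sx has_derivative dsx q) (at q)"
proof -
  have "((\<lambda>q. (cu q * cv q, cx q)) has_derivative (\<lambda>h. (cu q * cv h + cu h * cv q, cx h))) (at q)"
    by (intro has_derivative_Pair has_derivative_mult bounded_linear.has_derivative[OF bl_cu]
        bounded_linear.has_derivative[OF bl_cv] bounded_linear.has_derivative[OF bl_cx] has_derivative_ident)
  then show ?thesis unfolding sx_def[abs_def] dsx_def[abs_def] .
qed

lemma comp_sx_deriv:
  assumes "\<phi> differentiable at (sx q)"
  shows "((\<lambda>q. \<phi> (sx q)) has_derivative (\<lambda>h. frechet_derivative \<phi> (at (sx q)) (dsx q h))) (at q)"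
  using diff_chain_at[OF sx_deriv assms[unfolded frechet_derivative_works]] by (simp add: o_def)

lemma dsx_axis:
  "dsx q (axis CU 1) = (cv q, 0)" "dsx q (axis CV 1) = (cu q, 0)" "dsx q (axis (CX A) 1) = (0, axis A 1)"
  by (auto simp: dsx_def cu_def cv_def cx_def axis_def vec_eq_iff)

lemma lin_s: "linear L \<Longrightarrow> L (c, 0) = c *\<^sub>R L (1, 0)"
  using linear_cmul[of L c "(1,0)"] by simp




lemma partial_hd: "(f has_derivative f') (at q) \<Longrightarrow> partial i f q = f' (axis i 1)"
  unfolding partial_def using frechet_derivative_at by metis

lemma cuv_axis[simp]:
  "cu (axis CU 1 :: real^('n::finite coord)) = 1" "cv (axis CU 1 :: real^('n::finite coord)) = 0"
  "cu (axis CV 1 :: real^('n::finite coord)) = 0" "cv (axis CV 1 :: real^('n::finite coord)) = 1"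
  "cu (axis (CX A) 1 :: real^('n::finite coord)) = 0" "cv (axis (CX A) 1 :: real^('n::finite coord)) = 0"
  by (auto simp: cu_def cv_def axis_def)

locale pt =
  fixes G :: "real \<times> (real^'n::finite) \<Rightarrow> real" and \<beta> :: "real \<times> (real^'n) \<Rightarrow> real^'n"
    and q :: "real^('n coord)" and \<mu> :: "real \<times> (real^'n) \<Rightarrow> real^'n^'n"
  assumes dG: "G differentiable at (sx q)" and dB: "\<beta> differentiable at (sx q)"
begin

definition "GD = frechet_derivative G (at (sx q))"
definition "BD = frechet_derivative \<beta> (at (sx q))"

lemma linG: "linear GD" unfolding GD_def
  using dG frechet_derivative_works has_derivative_linear by blast
lemma linB: "linear BD" unfolding BD_def
  using dB frechet_derivative_works has_derivative_linear by blast

lemma dGs: "((\<lambda>q. G (sx q)) has_derivative (\<lambda>h. GD (dsx q h))) (at q)"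
  unfolding GD_def by (rule comp_sx_deriv[OF dG])
lemma dBs: "((\<lambda>q. \<beta> (sx q) $ A) has_derivative (\<lambda>h. BD (dsx q h) $ A)) (at q)"
  unfolding BD_def by (rule bounded_linear.has_derivative[OF bounded_linear_vec_nth comp_sx_deriv[OF dB]])

lemma dcu: "(cu has_derivative cu) (at q)" by (rule bounded_linear_imp_has_derivative[OF bl_cu])
lemma dcv: "(cv has_derivative cv) (at q)" by (rule bounded_linear_imp_has_derivative[OF bl_cv])

abbreviation "\<eta> \<equiv> flat (rw_metric G \<beta> \<mu>) killing_eta"

lemma dU: "((\<lambda>q. \<eta> q CU) has_derivative (\<lambda>h. -(GD (dsx q h) * cv q + G (sx q) * cv h))) (at q)"
  unfolding flat_CU by (rule has_derivative_eq_rhs[OF has_derivative_minus[OF has_derivative_mult[OF dGs dcv]]]) (auto simp: algebra_simps)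
lemma dV: "((\<lambda>q. \<eta> q CV) has_derivative (\<lambda>h. GD (dsx q h) * cu q + G (sx q) * cu h)) (at q)"
  unfolding flat_CV by (rule has_derivative_eq_rhs[OF has_derivative_mult[OF dGs dcu]]) (auto simp: algebra_simps)
lemma dX: "((\<lambda>q. \<eta> q (CX A)) has_derivative
   (\<lambda>h. GD (dsx q h) * cv q * \<beta> (sx q) $ A * cu q + G (sx q) * cv h * \<beta> (sx q) $ A * cu q
       + G (sx q) * cv q * BD (dsx q h) $ A * cu q + G (sx q) * cv q * \<beta> (sx q) $ A * cu h)) (at q)"
  unfolding flat_CX by (rule has_derivative_eq_rhs[OF has_derivative_mult[OF has_derivative_mult[OF has_derivative_mult[OF dGs dcv] dBs] dcu]]) (auto simp: algebra_simps)

lemmas pU = partial_hd[OF dU] and pV = partial_hd[OF dV] and pX = partial_hd[OF dX]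


lemma GDax: "GD (dsx q (axis CU 1)) = cv q * GD (1,0)" "GD (dsx q (axis CV 1)) = cu q * GD (1,0)"
  "GD (dsx q (axis (CX A) 1)) = GD (0, axis A 1)"
  by (simp_all add: dsx_axis lin_s[OF linG, of "cv q"] lin_s[OF linG, of "cu q"])
lemma BDax: "BD (dsx q (axis CU 1)) = cv q *\<^sub>R BD (1,0)" "BD (dsx q (axis CV 1)) = cu q *\<^sub>R BD (1,0)"
  "BD (dsx q (axis (CX A) 1)) = BD (0, axis A 1)"
  by (simp_all add: dsx_axis lin_s[OF linB, of "cv q"] lin_s[OF linB, of "cu q"])

lemma w1: "wedge_d \<eta> q CU CV (CX A) = -2 * (G (sx q))^2 * (cu q * cv q)^2 * (BD (1,0) $ A)"
  unfolding wedge_d_def dform_def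
  apply (simp only: pU pV pX)
  apply (simp add: GDax BDax flat_CU flat_CV flat_CX)
  apply (simp add: algebra_simps power2_eq_square)
  done
lemma w2: "wedge_d \<eta> q CU (CX A) (CX B) =
   (G (sx q))^2 * (- cv q) * (cu q * cv q) * (BD (0, axis A 1) $ B - BD (0, axis B 1) $ A)
   + (G (sx q))^2 * (cu q * cv q)^2 * cv q * (\<beta> (sx q) $ B * BD (1,0) $ A - \<beta> (sx q) $ A * BD (1,0) $ B)"
  unfolding wedge_d_def dform_def
  apply (simp only: pU pV pX)
  apply (simp add: GDax BDax flat_CU flat_CV flat_CX)
  apply (simp add: algebra_simps power2_eq_square)
  done

end



lemma lin_prod_decomp:
  fixes L :: "real \<times> (real^'n::finite) \<Rightarrow> 'b::real_vector"
  assumes "linear L"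
  shows "L (a, w) = a *\<^sub>R L (1,0) + (\<Sum>B\<in>UNIV. w$B *\<^sub>R L (0, axis B 1))"
proof -
  have w: "(\<Sum>B\<in>UNIV. w$B *\<^sub>R axis B 1) = w"
    using basis_expansion[of w] by (simp add: scalar_mult_eq_scaleR)
  have "(a, w) = a *\<^sub>R (1,0) + (\<Sum>B\<in>UNIV. w$B *\<^sub>R (0, axis B 1))"
    by (simp add: prod_eq_iff fst_sum snd_sum w)
  then have "L (a, w) = L (a *\<^sub>R (1,0) + (\<Sum>B\<in>UNIV. w$B *\<^sub>R (0, axis B 1)))" by simp
  also have "\<dots> = L (a *\<^sub>R (1,0)) + (\<Sum>B\<in>UNIV. L (w$B *\<^sub>R (0, axis B 1)))"
    by (simp only: linear_add[OF assms] linear_sum[OF assms] o_def)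
  also have "\<dots> = a *\<^sub>R L (1,0) + (\<Sum>B\<in>UNIV. w$B *\<^sub>R L (0, axis B 1))"
    by (simp only: linear_cmul[OF assms])
  finally show ?thesis .
qed

definition emb :: "real^'n \<Rightarrow> real^('n::finite coord)" where
  "emb v = (\<chi> i. case i of CX A \<Rightarrow> v $ A | _ \<Rightarrow> 0)"

lemma bl_emb: "bounded_linear (emb :: real^'n \<Rightarrow> real^('n::finite coord))"
proof -
  have "linear (emb :: real^'n \<Rightarrow> real^('n::finite coord))"
    by (rule linearI) (auto simp: emb_def vec_eq_iff split: coord.splits)
  then show ?thesis by (simp add: linear_conv_bounded_linear)
qed

lemma emb_nth: "emb v $ CU = 0" "emb v $ CV = 0" "emb v $ CX A = v $ A"
  by (auto simp: emb_def)

lemma dense_zero: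
  fixes h :: "real^('n::finite coord) \<Rightarrow> real"
  assumes "open \<Omega>" "p \<in> \<Omega>" "continuous_on \<Omega> h"
    and "\<And>q. q \<in> \<Omega> \<Longrightarrow> cu q \<noteq> 0 \<Longrightarrow> cv q \<noteq> 0 \<Longrightarrow> h q = 0"
  shows "h p = 0"
proof -
  define c where "c t = p + t *\<^sub>R (axis CU 1 + axis CV 1)" for t :: real
  have cl: "(c \<longlongrightarrow> p) (at 0)"
  proof -
    have "((\<lambda>t. p + t *\<^sub>R (axis CU 1 + axis CV 1 :: real^('n coord))) \<longlongrightarrow> p + 0 *\<^sub>R (axis CU 1 + axis CV 1)) (at 0)"
      by (intro tendsto_intros)
    then show ?thesis unfolding c_def by simp
  qed
  have hc: "((\<lambda>t. h (c t)) \<longlongrightarrow> h p) (at 0)"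
    using continuous_on_eq_continuous_at[OF assms(1)] assms(2,3) cl
    by (metis continuous_at isCont_tendsto_compose)
  have ev1: "eventually (\<lambda>t. c t \<in> \<Omega>) (at 0)"
    using topological_tendstoD[OF cl assms(1,2)] .
  have ev2: "eventually (\<lambda>t. t \<noteq> - cu p) (at (0::real))" by (rule eventually_neq_at_within)
  have ev3: "eventually (\<lambda>t. t \<noteq> - cv p) (at (0::real))" by (rule eventually_neq_at_within)
  have "eventually (\<lambda>t. h (c t) = 0) (at 0)"
    using ev1 ev2 ev3
  proof eventually_elim
    case (elim t)
    have "cu (c t) = cu p + t" "cv (c t) = cv p + t"
      by (auto simp: c_def cu_def cv_def axis_def)
    then show ?case using assms(4)[OF elim(1)] elim by auto
  qed
  then have "((\<lambda>t. 0) \<longlongrightarrow> h p) (at (0::real))"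
    using hc by (rule Lim_transform_eventually[rotated]) 
  then show ?thesis using tendsto_const tendsto_unique at_neq_bot by (metis trivial_limit_at)
qed




lemma sym_aux:
  fixes M :: "'n::finite \<Rightarrow> 'n \<Rightarrow> real"
  assumes "\<And>A B. M A B = M B A"
  shows "(\<Sum>A\<in>UNIV. (\<Sum>B\<in>UNIV. h B * M B A) * k A) = (\<Sum>A\<in>UNIV. (\<Sum>B\<in>UNIV. k B * M B A) * h A)"
proof -
  have "(\<Sum>A\<in>UNIV. (\<Sum>B\<in>UNIV. h B * M B A) * k A) = (\<Sum>A\<in>UNIV. \<Sum>B\<in>UNIV. h B * M B A * k A)"
    by (simp add: sum_distrib_right)
  also have "\<dots> = (\<Sum>B\<in>UNIV. \<Sum>A\<in>UNIV. h B * M B A * k A)" by (rule sum.swap)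
  also have "\<dots> = (\<Sum>B\<in>UNIV. (\<Sum>A\<in>UNIV. k A * M A B) * h B)"
    by (simp add: sum_distrib_right sum_distrib_left assms mult_ac)
  finally show ?thesis .
qed

theorem mainTheorem5:
  fixes G :: "real \<times> (real^'n::finite) \<Rightarrow> real"
    and \<beta> :: "real \<times> (real^'n) \<Rightarrow> real^'n"
    and \<mu> :: "real \<times> (real^'n) \<Rightarrow> (real^'n^'n)"
    and D :: "(real \<times> (real^'n)) set"
    and \<Omega> :: "(real^('n coord)) set"
  assumes "open D" and "open \<Omega>"
    and "\<forall>p\<in>\<Omega>. sx p \<in> D"
    and "smooth_on D G" and "smooth_on D \<beta>" and "smooth_on D \<mu>"
    and "\<forall>y\<in>D. G y \<noteq> 0"
    and "\<forall>y\<in>D. \<forall>A B. \<mu> y $ A $ B = \<mu> y $ B $ A"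
    and "\<forall>y\<in>D. \<forall>w::real^'n. w \<noteq> 0 \<longrightarrow> (\<Sum>A\<in>UNIV. \<Sum>B\<in>UNIV. \<mu> y $ A $ B * w $ A * w $ B) > 0"
    and "\<forall>p\<in>\<Omega>. \<forall>i j k. wedge_d (flat (rw_metric G \<beta> \<mu>) killing_eta) p i j k = 0"
  shows "(\<forall>p\<in>\<Omega>. \<forall>i j. dform (beta_form \<beta>) p i j = 0)
       \<and> (\<forall>p\<in>\<Omega>. \<exists>W. open W \<and> p \<in> W \<and> W \<subseteq> \<Omega> \<and>
             (\<exists>f. \<forall>q\<in>W. f differentiable (at q) \<and> (\<forall>i. partial i f q = beta_form \<beta> q i)))"
proof -
  have dG: "G differentiable at y" if "y \<in> D" for y
    using assms(4) assms(1) that unfolding smooth_on_def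
    by (metis Ck_on.simps(2) differentiable_on_eq_differentiable_at)
  have dB: "\<beta> differentiable at y" if "y \<in> D" for y
    using assms(5) assms(1) that unfolding smooth_on_def
    by (metis Ck_on.simps(2) differentiable_on_eq_differentiable_at)
  define Bd where "Bd y = frechet_derivative \<beta> (at y)" for y
  have linBd: "linear (Bd y)" if "y \<in> D" for y
    unfolding Bd_def using dB[OF that] frechet_derivative_works has_derivative_linear by blast
  have cB: "continuous_on D (\<lambda>y. Bd y v)" if "v \<in> Basis" for v
    using assms(5) that unfolding smooth_on_def Bd_def
    by (metis Ck_on.simps(1) Ck_on.simps(2))
  have b10: "(1::real, 0::real^'n) \<in> Basis" by (simp add: Basis_prod_def)
  have b0A: "(0::real, axis A (1::real)) \<in> Basis" for A :: 'n by (auto simp: Basis_prod_def)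
  have sxc: "continuous_on UNIV (sx :: real^('n coord) \<Rightarrow> _)"
    using sx_deriv by (meson continuous_at_imp_continuous_on has_derivative_continuous)
  have sxim: "sx ` \<Omega> \<subseteq> D" using assms(3) by auto
  have hcont: "continuous_on \<Omega> (\<lambda>q. Bd (sx q) v)" if "v \<in> Basis" for v
    using continuous_on_compose2[OF cB[OF that] continuous_on_subset[OF sxc] sxim] by simp
  have hcontA: "continuous_on \<Omega> (\<lambda>q. Bd (sx q) v $ A)" if "v \<in> Basis" for v A
    using bounded_linear.continuous_on[OF bounded_linear_vec_nth hcont[OF that]] .
  have ptq: "pt G \<beta> q" if "q \<in> \<Omega>" for q
    using dG dB assms(3) that by unfold_locales auto
  have BDeq: "pt.BD \<beta> q = Bd (sx q)" if "q \<in> \<Omega>" for q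
    using ptq[OF that] by (simp add: pt.BD_def Bd_def)
  have A1: "Bd (sx q) (1,0) $ A = 0" if q: "q \<in> \<Omega>" "cu q \<noteq> 0" "cv q \<noteq> 0" for q A
  proof -
    interpret pt G \<beta> q by (rule ptq[OF q(1)])
    have "wedge_d (flat (rw_metric G \<beta> \<mu>) killing_eta) q CU CV (CX A) = 0" using assms(10) q by auto
    then have "-2 * (G (sx q))^2 * (cu q * cv q)^2 * (BD (1,0) $ A) = 0" using w1 by simp
    moreover have "G (sx q) \<noteq> 0" using assms(7,3) q by auto
    ultimately show ?thesis using q BDeq[OF q(1)] by simp
  qed
  have B1: "Bd (sx q) (1,0) $ A = 0" if "q \<in> \<Omega>" for q A
    by (rule dense_zero[OF assms(2) that hcontA[OF b10]]) (use A1 in auto)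
  have B1v: "Bd (sx q) (1,0) = 0" if "q \<in> \<Omega>" for q
    using B1[OF that] by (simp add: vec_eq_iff)
  have A2: "Bd (sx q) (0, axis A 1) $ B - Bd (sx q) (0, axis B 1) $ A = 0"
    if q: "q \<in> \<Omega>" "cu q \<noteq> 0" "cv q \<noteq> 0" for q A B
  proof -
    interpret pt G \<beta> q by (rule ptq[OF q(1)])
    have "wedge_d (flat (rw_metric G \<beta> \<mu>) killing_eta) q CU (CX A) (CX B) = 0" using assms(10) q by auto
    then have "(G (sx q))^2 * (- cv q) * (cu q * cv q) * (Bd (sx q) (0, axis A 1) $ B - Bd (sx q) (0, axis B 1) $ A) = 0"
      using w2 BDeq[OF q(1)] B1[OF q(1)] by simp
    moreover have "G (sx q) \<noteq> 0" using assms(7,3) q by auto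
    ultimately show ?thesis using q by simp
  qed
  have B2: "Bd (sx q) (0, axis A 1) $ B = Bd (sx q) (0, axis B 1) $ A" if "q \<in> \<Omega>" for q A B
  proof -
    have "Bd (sx q) (0, axis A 1) $ B - Bd (sx q) (0, axis B 1) $ A = 0"
      by (rule dense_zero[OF assms(2) that continuous_on_diff[OF hcontA[OF b0A] hcontA[OF b0A]]])
         (use A2 in auto)
    then show ?thesis by simp
  qed
  have Bdc: "Bd (sx q) (c, 0) = 0" if "q \<in> \<Omega>" for q c
    using lin_s[OF linBd, of "sx q" c] B1v[OF that] assms(3) that by simp
  have pbf: "partial i (\<lambda>q. beta_form \<beta> q j) p = (case j of CX A \<Rightarrow> Bd (sx p) (dsx p (axis i 1)) $ A | _ \<Rightarrow> 0)"
    if p: "p \<in> \<Omega>" for p i j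
  proof (cases j)
    case CU
    have "(\<lambda>q. beta_form \<beta> q j) = (\<lambda>q. 0)" by (simp add: beta_form_def CU)
    then show ?thesis using partial_hd[OF has_derivative_const] CU by simp
  next
    case CV
    have "(\<lambda>q. beta_form \<beta> q j) = (\<lambda>q. 0)" by (simp add: beta_form_def CV)
    then show ?thesis using partial_hd[OF has_derivative_const] CV by simp
  next
    case (CX A)
    interpret pt G \<beta> p by (rule ptq[OF p])
    have "(\<lambda>q. beta_form \<beta> q j) = (\<lambda>q. \<beta> (sx q) $ A)" by (simp add: beta_form_def CX)
    then show ?thesis using partial_hd[OF dBs] CX BDeq[OF p] by simp
  qed
  have pbf2: "partial i (\<lambda>q. beta_form \<beta> q j) p = (case (i, j) of (CX B, CX A) \<Rightarrow> Bd (sx p) (0, axis B 1) $ A | _ \<Rightarrow> 0)"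
    if p: "p \<in> \<Omega>" for p i j
    using pbf[OF p, of i j] Bdc[OF p]
    by (cases i; cases j) (auto simp: dsx_axis)
  have part1: "\<forall>p\<in>\<Omega>. \<forall>i j. dform (beta_form \<beta>) p i j = 0"
  proof (intro ballI allI)
    fix p i j assume p: "p \<in> \<Omega>"
    show "dform (beta_form \<beta>) p i j = 0"
      unfolding dform_def pbf2[OF p] using B2[OF p]
      by (cases i; cases j) auto
  qed
  have part2: "\<exists>W. open W \<and> p \<in> W \<and> W \<subseteq> \<Omega> \<and>
             (\<exists>f. \<forall>q\<in>W. f differentiable (at q) \<and> (\<forall>i. partial i f q = beta_form \<beta> q i))"
    if p: "p \<in> \<Omega>" for p
  proof -
    obtain r where r: "r > 0" "ball p r \<subseteq> \<Omega>" using assms(2) p openE by blast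
    define F where "F q = emb (\<beta> (sx q))" for q
    define F' where "F' q h = emb (Bd (sx q) (dsx q h))" for q h
    have der: "(F has_derivative F' x) (at x)" if "x \<in> ball p r" for x
    proof -
      have "x \<in> \<Omega>" using that r by auto
      then have "sx x \<in> D" using assms(3) by auto
      show ?thesis unfolding F_def[abs_def] F'_def[abs_def] Bd_def
        by (rule bounded_linear.has_derivative[OF bl_emb comp_sx_deriv[OF dB[OF \<open>sx x \<in> D\<close>]]])
    qed
    have F'exp: "F' x h = emb (\<chi> A. \<Sum>B\<in>UNIV. h $ CX B * Bd (sx x) (0, axis B 1) $ A)" if "x \<in> \<Omega>" for x h
    proof -
      have "Bd (sx x) (dsx x h) = (\<Sum>B\<in>UNIV. (cx h) $ B *\<^sub>R Bd (sx x) (0, axis B 1))"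
      proof -
        have "sx x \<in> D" using assms(3) that by auto
        then show ?thesis unfolding dsx_def
          using lin_prod_decomp[OF linBd[OF \<open>sx x \<in> D\<close>], of "cu x * cv h + cu h * cv x" "cx h"] B1v[OF that]
          by simp
      qed
      then show ?thesis unfolding F'_def by (intro arg_cong[where f=emb]) (simp add: vec_eq_iff cx_def)
    qed
    have sym: "F' x h \<bullet> k = F' x k \<bullet> h" if "x \<in> ball p r" for x h k
    proof -
      have x: "x \<in> \<Omega>" using that r by auto
      define M where "M B A = Bd (sx x) (0, axis B 1) $ A" for B A
      have M: "M A B = M B A" for A B unfolding M_def using B2[OF x] by simp
      have e: "F' x h' \<bullet> k' = (\<Sum>A\<in>UNIV. (\<Sum>B\<in>UNIV. h' $ CX B * M B A) * k' $ CX A)" for h' k'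
        unfolding F'exp[OF x] inner_vec_def sum_coord M_def by (simp add: emb_nth)
      show ?thesis unfolding e by (rule sym_aux[OF M])
    qed
    have cont: "continuous_on (ball p r) (\<lambda>x. F' x i)" if i: "i \<in> Basis" for i
    proof -
      have Bdcb: "Bd (sx x) (c', 0) = 0" if "x \<in> ball p r" for x c'
        using Bdc that r(2) by blast
      obtain c where c: "i = axis c 1" using i by (auto simp: Basis_vec_def)
      show ?thesis
      proof (cases c)
        case CU
        have "continuous_on (ball p r) (\<lambda>x. 0 :: real^('n coord))" by simp
        then show ?thesis
          by (rule continuous_on_eq) (use r in \<open>auto simp: F'_def c CU dsx_axis Bdcb emb_def vec_eq_iff split: coord.splits\<close>)
      next
        case CV
        have "continuous_on (ball p r) (\<lambda>x. 0 :: real^('n coord))" by simp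
        then show ?thesis
          by (rule continuous_on_eq) (use r in \<open>auto simp: F'_def c CV dsx_axis Bdcb emb_def vec_eq_iff split: coord.splits\<close>)
      next
        case (CX B)
        have "continuous_on (ball p r) (\<lambda>x. emb (Bd (sx x) (0, axis B 1)))"
          using bounded_linear.continuous_on[OF bl_emb continuous_on_subset[OF hcont[OF b0A] r(2)]] .
        then show ?thesis by (simp add: F'_def c CX dsx_axis)
      qed
    qed
    obtain f where f: "\<And>q. q \<in> ball p r \<Longrightarrow> (f has_derivative (\<lambda>h. F q \<bullet> h)) (at q)"
      using poincare[OF convex_ball open_ball centre_in_ball[THEN iffD2, OF r(1)] der sym cont] by blast
    show ?thesis
    proof (intro exI conjI ballI allI)
      show "open (ball p r)" "p \<in> ball p r" "ball p r \<subseteq> \<Omega>" using r by auto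
      fix q i assume q: "q \<in> ball p r"
      show "f differentiable (at q)" using f[OF q] by (auto simp: differentiable_def)
      have "partial i f q = F q \<bullet> axis i 1" by (rule partial_hd[OF f[OF q]])
      also have "\<dots> = beta_form \<beta> q i"
        by (cases i) (auto simp: inner_axis F_def emb_nth beta_form_def)
      finally show "partial i f q = beta_form \<beta> q i" .
    qed
  qed
  show ?thesis using part1 part2 by blast
qed


end
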